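(* Let $n>24$, $\beta>\frac{\log 3}{\log n}$, $\lambda>\frac12$, and $m=n^{1/2+\beta+\lambda}$ (assumed to be an integer). Then $$\mathsf P\left\{\left|\sum_{i=1}^n \frac{k_i(x)(k_i(x)-1)}{m(m-1)}\cdot\frac{1}{\|p\|^2}-1\right|\le \frac{22}{5}\,n^{-\beta/2}\right\}\ \ge\ 1-\frac{10}{9}e^{-n^{\lambda-1/2}}.$$
   Context: Standing setup: $U$ is a finite set (the key space) with a probability measure $q$; $T=\{1,\dots,n\}$; $h:U\to T$ is an arbitrary function. $p_i=\sum_{u\in h^{-1}(i)}q(u)$ and $\|p\|^2=\sum_{i=1}^n p_i^2$. $U^m$ carries the product measure $q^m$, and $\mathsf P$ denotes probability under $q^m$ of the event for $x=(x_1,\dots,x_m)\in U^m$. $k_i(x)=|\{j: h(x_j)=i\}|$. *)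

theory Defs
  imports "HOL-Analysis.Analysis"
begin

text \<open>Key space U (finite) with probability weights q; hash h : U -> {1..n}.
  Samples x in U^m are functions on {0..<m} (extensional elsewhere).\<close>

definition bucket_prob :: "'a set \<Rightarrow> ('a \<Rightarrow> real) \<Rightarrow> ('a \<Rightarrow> nat) \<Rightarrow> nat \<Rightarrow> real" where
  "bucket_prob U q h i = (\<Sum>u\<in>{u\<in>U. h u = i}. q u)"

definition sq_norm_p :: "'a set \<Rightarrow> ('a \<Rightarrow> real) \<Rightarrow> ('a \<Rightarrow> nat) \<Rightarrow> nat \<Rightarrow> real" where
  "sq_norm_p U q h n = (\<Sum>i=1..n. (bucket_prob U q h i)^2)"

definition load :: "('a \<Rightarrow> nat) \<Rightarrow> nat \<Rightarrow> (nat \<Rightarrow> 'a) \<Rightarrow> nat \<Rightarrow> nat" where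
  "load h m x i = card {j\<in>{..<m}. h (x j) = i}"

definition prob_prod :: "'a set \<Rightarrow> ('a \<Rightarrow> real) \<Rightarrow> nat \<Rightarrow> ((nat \<Rightarrow> 'a) \<Rightarrow> bool) \<Rightarrow> real" where
  "prob_prod U q m E = (\<Sum>x\<in>{x\<in>PiE {..<m} (\<lambda>_. U). E x}. \<Prod>j<m. q (x j))"

end

theory Submission
  imports Defs "HOL-Combinatorics.Permutations"
begin

lemma sum_PiE_insert':
  assumes "a \<notin> J"
  shows "(\<Sum>x\<in>PiE (insert a J) (\<lambda>_. U). F x) = (\<Sum>u\<in>U. \<Sum>x\<in>PiE J (\<lambda>_. U). F (x(a:=u)))"
proof -
  have "(\<Sum>x\<in>PiE (insert a J) (\<lambda>_. U). F x) = (\<Sum>(u,x)\<in>U \<times> PiE J (\<lambda>_. U). F (x(a:=u)))"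
    using assms
    by (intro sum.reindex_bij_witness[of _ "\<lambda>(y,g). g(a := y)" "\<lambda>g. (g a, g(a := undefined))"])
       (auto simp: PiE_def extensional_def)
  also have "\<dots> = (\<Sum>u\<in>U. \<Sum>x\<in>PiE J (\<lambda>_. U). F (x(a:=u)))"
    by (subst sum.cartesian_product) auto
  finally show ?thesis .
qed

lemma pair_factor:
  fixes q :: "'a \<Rightarrow> real"
  assumes "finite I" "a \<noteq> b" "a \<notin> I" "b \<notin> I"
    and G: "\<And>x y. (\<And>i. i \<in> I \<Longrightarrow> x i = y i) \<Longrightarrow> G x = G y"
  shows "(\<Sum>x\<in>PiE (insert a (insert b I)) (\<lambda>_. U).
           (\<Prod>j\<in>insert a (insert b I). q (x j)) * (\<phi> (x a) (x b) * G x))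
       = (\<Sum>u\<in>U. \<Sum>v\<in>U. q u * q v * \<phi> u v) * (\<Sum>x\<in>PiE I (\<lambda>_. U). (\<Prod>j\<in>I. q (x j)) * G x)"
proof -
  have "(\<Sum>x\<in>PiE (insert a (insert b I)) (\<lambda>_. U).
           (\<Prod>j\<in>insert a (insert b I). q (x j)) * (\<phi> (x a) (x b) * G x))
     = (\<Sum>u\<in>U. \<Sum>v\<in>U. \<Sum>x\<in>PiE I (\<lambda>_. U).
           (\<Prod>j\<in>insert a (insert b I). q ((x(b:=v,a:=u)) j)) * (\<phi> u v * G (x(b:=v,a:=u))))"
  proof -
    have "a \<notin> insert b I" using assms by auto
    then have "(\<Sum>x\<in>PiE (insert a (insert b I)) (\<lambda>_. U).
           (\<Prod>j\<in>insert a (insert b I). q (x j)) * (\<phi> (x a) (x b) * G x))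
      = (\<Sum>u\<in>U. \<Sum>x\<in>PiE (insert b I) (\<lambda>_. U).
           (\<Prod>j\<in>insert a (insert b I). q ((x(a:=u)) j)) * (\<phi> ((x(a:=u)) a) ((x(a:=u)) b) * G (x(a:=u))))"
      by (rule sum_PiE_insert')
    also have "\<dots> = (\<Sum>u\<in>U. \<Sum>v\<in>U. \<Sum>x\<in>PiE I (\<lambda>_. U).
           (\<Prod>j\<in>insert a (insert b I). q ((x(b:=v,a:=u)) j)) * (\<phi> ((x(b:=v,a:=u)) a) ((x(b:=v,a:=u)) b) * G (x(b:=v,a:=u))))"
      by (intro sum.cong refl sum_PiE_insert') (use assms in auto)
    also have "\<dots> = (\<Sum>u\<in>U. \<Sum>v\<in>U. \<Sum>x\<in>PiE I (\<lambda>_. U).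
           (\<Prod>j\<in>insert a (insert b I). q ((x(b:=v,a:=u)) j)) * (\<phi> u v * G (x(b:=v,a:=u))))"
      using assms(2) by simp
    finally show ?thesis .
  qed
  also have "\<dots> = (\<Sum>u\<in>U. \<Sum>v\<in>U. \<Sum>x\<in>PiE I (\<lambda>_. U).
           (q u * q v * \<phi> u v) * ((\<Prod>j\<in>I. q (x j)) * G x))"
  proof (intro sum.cong refl)
    fix u v x
    have "(\<Prod>j\<in>insert a (insert b I). q ((x(b:=v,a:=u)) j)) = q u * (q v * (\<Prod>j\<in>I. q (x j)))"
      using assms by (auto intro!: prod.cong)
    moreover have "G (x(b:=v,a:=u)) = G x" using assms by (intro G) auto
    ultimately show "(\<Prod>j\<in>insert a (insert b I). q ((x(b:=v,a:=u)) j)) * (\<phi> u v * G (x(b:=v,a:=u)))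
      = (q u * q v * \<phi> u v) * ((\<Prod>j\<in>I. q (x j)) * G x)" by simp
  qed
  also have "\<dots> = (\<Sum>u\<in>U. \<Sum>v\<in>U. q u * q v * \<phi> u v) * (\<Sum>x\<in>PiE I (\<lambda>_. U). (\<Prod>j\<in>I. q (x j)) * G x)"
  proof -
    have "(\<Sum>u\<in>U. \<Sum>v\<in>U. \<Sum>x\<in>PiE I (\<lambda>_. U). (q u * q v * \<phi> u v) * ((\<Prod>j\<in>I. q (x j)) * G x))
       = (\<Sum>u\<in>U. \<Sum>v\<in>U. (q u * q v * \<phi> u v) * (\<Sum>x\<in>PiE I (\<lambda>_. U). (\<Prod>j\<in>I. q (x j)) * G x))"
      by (simp add: sum_distrib_left)
    also have "\<dots> = (\<Sum>u\<in>U. \<Sum>v\<in>U. q u * q v * \<phi> u v) * (\<Sum>x\<in>PiE I (\<lambda>_. U). (\<Prod>j\<in>I. q (x j)) * G x)"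
      by (simp add: sum_distrib_right)
    finally show ?thesis .
  qed
  finally show ?thesis .
qed

lemma pairs_factor:
  fixes q :: "'a \<Rightarrow> real" and \<pi> :: "nat \<Rightarrow> nat"
  assumes "inj_on \<pi> {..<2*r}" "finite I" "\<pi> ` {..<2*r} \<inter> I = {}"
    and "\<And>x y. (\<And>i. i \<in> I \<Longrightarrow> x i = y i) \<Longrightarrow> G x = G y"
  shows "(\<Sum>x\<in>PiE (\<pi> ` {..<2*r} \<union> I) (\<lambda>_. U).
           (\<Prod>j\<in>\<pi> ` {..<2*r} \<union> I. q (x j)) * ((\<Prod>k<r. \<phi> (x (\<pi> (2*k))) (x (\<pi> (2*k+1)))) * G x))
       = (\<Sum>u\<in>U. \<Sum>v\<in>U. q u * q v * \<phi> u v) ^ r * (\<Sum>x\<in>PiE I (\<lambda>_. U). (\<Prod>j\<in>I. q (x j)) * G x)"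
  using assms
proof (induction r arbitrary: I G)
  case 0
  show ?case by simp
next
  case (Suc r)
  define a where "a = \<pi> (2*r)"
  define b where "b = \<pi> (2*r+1)"
  define I' where "I' = insert a (insert b I)"
  define G' where "G' = (\<lambda>x. \<phi> (x a) (x b) * G x)"
  have inj: "inj_on \<pi> {..<2*r}" using Suc.prems(1) by (rule inj_on_subset) auto
  have i1: "2*r \<in> {..<2*Suc r}" "2*r+1 \<in> {..<2*Suc r}" by auto
  have ab1: "a \<noteq> b" unfolding a_def b_def using inj_onD[OF Suc.prems(1) _ i1] by fastforce
  have ab2: "a \<notin> I" "b \<notin> I" unfolding a_def b_def using Suc.prems(3) i1 by blast+
  have ab3: "a \<notin> \<pi> ` {..<2*r}" "b \<notin> \<pi> ` {..<2*r}"
  proof -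
    show "a \<notin> \<pi> ` {..<2*r}"
    proof
      assume "a \<in> \<pi> ` {..<2*r}"
      then obtain k where k: "k < 2*r" "\<pi> k = \<pi> (2*r)" unfolding a_def by auto
      then have "k = 2*r" using inj_onD[OF Suc.prems(1) k(2)] by auto
      with k show False by simp
    qed
    show "b \<notin> \<pi> ` {..<2*r}"
    proof
      assume "b \<in> \<pi> ` {..<2*r}"
      then obtain k where k: "k < 2*r" "\<pi> k = \<pi> (2*r+1)" unfolding b_def by auto
      then have "k = 2*r+1" using inj_onD[OF Suc.prems(1) k(2)] by auto
      with k show False by simp
    qed
  qed
  have setEq: "\<pi> ` {..<2*Suc r} \<union> I = \<pi> ` {..<2*r} \<union> I'"
  proof -
    have "{..<2*Suc r} = insert (2*r) (insert (2*r+1) {..<2*r})" by auto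
    then show ?thesis unfolding I'_def a_def b_def by auto
  qed
  have sub: "\<pi> ` {..<2*r} \<subseteq> \<pi> ` {..<2*Suc r}" by (rule image_mono) auto
  have disj': "\<pi> ` {..<2*r} \<inter> I' = {}" using Suc.prems(3) ab3 sub unfolding I'_def by blast
  have fin': "finite I'" unfolding I'_def using Suc.prems(2) by simp
  have G': "G' x = G' y" if "\<And>i. i \<in> I' \<Longrightarrow> x i = y i" for x y
    using that Suc.prems(4)[of x y] unfolding G'_def I'_def by auto
  have prodEq: "(\<Prod>k<Suc r. \<phi> (x (\<pi> (2*k))) (x (\<pi> (2*k+1)))) * G x
      = (\<Prod>k<r. \<phi> (x (\<pi> (2*k))) (x (\<pi> (2*k+1)))) * G' x" for x
    unfolding G'_def a_def b_def by (simp add: mult.assoc)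
  have "(\<Sum>x\<in>PiE (\<pi> ` {..<2*Suc r} \<union> I) (\<lambda>_. U).
           (\<Prod>j\<in>\<pi> ` {..<2*Suc r} \<union> I. q (x j)) * ((\<Prod>k<Suc r. \<phi> (x (\<pi> (2*k))) (x (\<pi> (2*k+1)))) * G x))
     = (\<Sum>x\<in>PiE (\<pi> ` {..<2*r} \<union> I') (\<lambda>_. U).
           (\<Prod>j\<in>\<pi> ` {..<2*r} \<union> I'. q (x j)) * ((\<Prod>k<r. \<phi> (x (\<pi> (2*k))) (x (\<pi> (2*k+1)))) * G' x))"
    unfolding setEq prodEq ..
  also have "\<dots> = (\<Sum>u\<in>U. \<Sum>v\<in>U. q u * q v * \<phi> u v) ^ r * (\<Sum>x\<in>PiE I' (\<lambda>_. U). (\<Prod>j\<in>I'. q (x j)) * G' x)"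
    by (rule Suc.IH[OF inj fin' disj' G'])
  also have "(\<Sum>x\<in>PiE I' (\<lambda>_. U). (\<Prod>j\<in>I'. q (x j)) * G' x)
     = (\<Sum>u\<in>U. \<Sum>v\<in>U. q u * q v * \<phi> u v) * (\<Sum>x\<in>PiE I (\<lambda>_. U). (\<Prod>j\<in>I. q (x j)) * G x)"
    unfolding I'_def G'_def by (rule pair_factor[OF Suc.prems(2) ab1 ab2 Suc.prems(4)])
  finally show ?case by (simp add: mult.assoc)
qed

lemma perm_pair_shift:
  fixes g :: "nat \<Rightarrow> nat \<Rightarrow> real"
  assumes "a \<in> S" "b \<in> S" "a \<noteq> b" "0 \<in> S" "1 \<in> (S::nat set)"
  shows "(\<Sum>\<sigma>\<in>{\<sigma>. \<sigma> permutes S}. g (\<sigma> a) (\<sigma> b)) = (\<Sum>\<sigma>\<in>{\<sigma>. \<sigma> permutes S}. g (\<sigma> 0) (\<sigma> 1))"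
proof -
  define c where "c = (if a = 1 then 0 else (1::nat))"
  define \<pi> where "\<pi> = Transposition.transpose c b \<circ> Transposition.transpose 0 a"
  have cS: "c \<in> S" using assms unfolding c_def by auto
  have ca: "c \<noteq> a" unfolding c_def by auto
  have perm: "\<pi> permutes S" unfolding \<pi>_def
    by (intro permutes_compose permutes_swap_id) (use assms cS in auto)
  have p0: "\<pi> 0 = a" unfolding \<pi>_def using ca assms(3) by (simp add: Transposition.transpose_def)
  have p1: "\<pi> 1 = b" unfolding \<pi>_def c_def by (simp add: Transposition.transpose_def)
  have "(\<Sum>\<sigma>\<in>{\<sigma>. \<sigma> permutes S}. g (\<sigma> 0) (\<sigma> 1)) = (\<Sum>\<sigma>\<in>{\<sigma>. \<sigma> permutes S}. g ((\<sigma> \<circ> \<pi>) 0) ((\<sigma> \<circ> \<pi>) 1))"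
    by (rule sum_permutations_compose_right[OF perm])
  also have "\<dots> = (\<Sum>\<sigma>\<in>{\<sigma>. \<sigma> permutes S}. g (\<sigma> a) (\<sigma> b))" using p0 p1 by simp
  finally show ?thesis by simp
qed

lemma perm_pair_count:
  fixes g :: "nat \<Rightarrow> nat \<Rightarrow> real"
  assumes "a < m" "b < m" "a \<noteq> b"
  shows "real m * (real m - 1) * (\<Sum>\<sigma>\<in>{\<sigma>. \<sigma> permutes {..<m}}. g (\<sigma> a) (\<sigma> b))
       = fact m * (\<Sum>j<m. \<Sum>l\<in>{..<m}-{j}. g j l)"
proof -
  let ?S = "{..<m}"
  let ?P = "{\<sigma>. \<sigma> permutes ?S}"
  define T where "T = (\<lambda>a b. \<Sum>\<sigma>\<in>?P. g (\<sigma> a) (\<sigma> b))"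
  have m2: "0 \<in> ?S" "1 \<in> ?S" using assms by auto
  have T01: "T j l = T 0 1" if "j < m" "l < m" "j \<noteq> l" for j l
    unfolding T_def using perm_pair_shift[of j ?S l g] that m2 by auto
  have "(\<Sum>j<m. \<Sum>l\<in>?S-{j}. T j l) = (\<Sum>j<m. \<Sum>l\<in>?S-{j}. T 0 1)"
    by (intro sum.cong refl T01) auto
  also have "\<dots> = (\<Sum>j<m. (real m - 1) * T 0 1)"
    using assms by (intro sum.cong refl) (auto simp: card_Diff_singleton of_nat_diff)
  also have "\<dots> = real m * (real m - 1) * T 0 1" by simp
  finally have L: "(\<Sum>j<m. \<Sum>l\<in>?S-{j}. T j l) = real m * (real m - 1) * T 0 1" .
  have inner: "(\<Sum>j<m. \<Sum>l\<in>?S-{j}. g (\<sigma> j) (\<sigma> l)) = (\<Sum>j<m. \<Sum>l\<in>?S-{j}. g j l)"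
    if \<sigma>: "\<sigma> permutes ?S" for \<sigma>
  proof -
    have "(\<Sum>l\<in>?S-{j}. g (\<sigma> j) (\<sigma> l)) = (\<Sum>l\<in>?S-{\<sigma> j}. g (\<sigma> j) l)" if "j < m" for j
    proof -
      have inj: "inj_on \<sigma> (?S-{j})" using permutes_inj_on[OF \<sigma>] .
      have im: "\<sigma> ` (?S-{j}) = ?S-{\<sigma> j}"
        using permutes_image[OF \<sigma>] permutes_inj[OF \<sigma>] by (auto simp: inj_eq)
      show ?thesis using sum.reindex[OF inj, of "g (\<sigma> j)"] im by simp
    qed
    then have "(\<Sum>j<m. \<Sum>l\<in>?S-{j}. g (\<sigma> j) (\<sigma> l)) = (\<Sum>j<m. (\<lambda>j'. \<Sum>l\<in>?S-{j'}. g j' l) (\<sigma> j))"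
      by simp
    also have "\<dots> = (\<Sum>j<m. \<Sum>l\<in>?S-{j}. g j l)"
      using sum.permute[OF \<sigma>, of "\<lambda>j'. \<Sum>l\<in>?S-{j'}. g j' l"] by (simp add: comp_def)
    finally show ?thesis .
  qed
  have "(\<Sum>j<m. \<Sum>l\<in>?S-{j}. T j l) = (\<Sum>\<sigma>\<in>?P. \<Sum>j<m. \<Sum>l\<in>?S-{j}. g (\<sigma> j) (\<sigma> l))"
    unfolding T_def by (simp add: sum.swap[of _ ?P] sum.swap[of _ ?P "?S - _"])
  also have "\<dots> = (\<Sum>\<sigma>\<in>?P. \<Sum>j<m. \<Sum>l\<in>?S-{j}. g j l)"
    by (rule sum.cong[OF refl], rule inner) auto
  also have "\<dots> = fact m * (\<Sum>j<m. \<Sum>l\<in>?S-{j}. g j l)"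
    using card_permutations[of ?S m] by simp
  finally have R: "(\<Sum>j<m. \<Sum>l\<in>?S-{j}. T j l) = fact m * (\<Sum>j<m. \<Sum>l\<in>?S-{j}. g j l)" .
  have "real m * (real m - 1) * T a b = fact m * (\<Sum>j<m. \<Sum>l\<in>?S-{j}. g j l)"
    using L R T01[OF assms] by simp
  then show ?thesis unfolding T_def .
qed

lemma final_arith:
  fixes n P X r s2 t :: real
  assumes n: "n > 24" and P: "P > 3" and X: "X > 1" and r: "r \<ge> (n*P*X - 1)/2"
    and s2: "s2 \<ge> 1/n" and t: "t^2 = 484/(25*P)"
  shows "2 * exp (-(2/9) * r * s2 * t^2) \<le> 10/9 * exp (-X)"
proof -
  define D where "D = (2/9) * r * s2 * t^2"
  have "24 * 3 < n * P" by (rule mult_strict_mono) (use n P in auto)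
  then have nP: "n * P > 72" by simp
  have "72 * 1 < n * P * X" by (rule mult_strict_mono) (use nP X in auto)
  then have pos: "n*P*X - 1 > 0" by simp
  have "D \<ge> (2/9) * ((n*P*X - 1)/2) * (1/n) * (484/(25*P))"
    unfolding D_def t
  proof -
    have "(n*P*X - 1)/2 * (1/n) \<le> r * s2"
      by (rule mult_mono) (use r s2 pos n in auto)
    then show "(2/9) * ((n*P*X - 1)/2) * (1/n) * (484/(25*P)) \<le> (2/9) * r * s2 * (484/(25*P))"
    proof -
      have c0: "(2/9)*(484/(25*P)) \<ge> (0::real)" using P by simp
      from mult_left_mono[OF \<open>(n*P*X - 1)/2 * (1/n) \<le> r * s2\<close> c0]
      show ?thesis by (simp add: ac_simps)
    qed
  qed
  also have "(2/9) * ((n*P*X - 1)/2) * (1/n) * (484/(25*P)) = 484/225 * (X - 1/(n*P))"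
    using n P by (simp add: field_simps)
  finally have D: "D \<ge> 484/225 * (X - 1/(n*P))" .
  have "1/(n*P) \<le> 1/72" using nP by (simp add: frac_le)
  moreover have "484/225 * (X - 1/(n*P)) = 484/225*X - 484/225*(1/(n*P))" by (rule right_diff_distrib)
  ultimately have XD: "X - D \<le> -1" using D X by linarith
  have e1: "exp (-1::real) \<le> 5/9"
  proof -
    have "exp (1::real) \<ge> 2" using exp_ge_add_one_self[of 1] by simp
    then show ?thesis by (simp add: exp_minus field_simps)
  qed
  have "exp (-D) = exp (X - D) * exp (-X)" by (simp add: exp_add[symmetric])
  also have "\<dots> \<le> exp (-1) * exp (-X)" using XD by simp
  also have "\<dots> \<le> 5/9 * exp (-X)" using e1 by simp
  finally have "exp (-D) \<le> 5/9 * exp (-X)" .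
  then show ?thesis unfolding D_def by simp
qed

lemma mgf_bound:
  fixes q :: "'a \<Rightarrow> real" and f :: "'a \<Rightarrow> 'a \<Rightarrow> real" and \<theta> :: real and m r :: nat and s2 :: real and Y :: "(nat \<Rightarrow> 'a) \<Rightarrow> real"
  assumes U: "finite U" and q0: "\<And>u. u\<in>U \<Longrightarrow> q u \<ge> 0" and q1: "(\<Sum>u\<in>U. q u) = 1"
    and f01: "\<And>u v. f u v = 0 \<or> f u v = 1"
    and m2: "2 \<le> m"
    and s2_def: "s2 = (\<Sum>u\<in>U. \<Sum>v\<in>U. q u * q v * f u v)"
    and r_def: "r = m div 2"
    and Y_def: "Y = (\<lambda>x. (\<Sum>j<m. \<Sum>l\<in>{..<m}-{j}. f (x j) (x l)) / (real m * (real m - 1)))"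
  shows "(\<Sum>x\<in>PiE {..<m} (\<lambda>_. U). (\<Prod>j<m. q (x j)) * exp (\<theta> * r * (Y x - s2)))
           \<le> exp (r * s2 * (exp \<theta> - 1 - \<theta>))"
proof -
  let ?S = "{..<m}"
  let ?P = "{\<sigma>. \<sigma> permutes ?S}"
  let ?\<Omega> = "PiE ?S (\<lambda>_. U)"
  define N where "N = (fact m :: real)"
  define Z where "Z = (\<lambda>(\<sigma>::nat\<Rightarrow>nat) x. \<Sum>k<r. f (x (\<sigma> (2*k))) (x (\<sigma> (2*k+1))))"
  define K where "K = (\<lambda>x. \<Sum>j<m. \<Sum>l\<in>?S-{j}. f (x j) (x l))"
  define \<phi> where "\<phi> = (\<lambda>u v. exp (\<theta> * (f u v - s2)))"
  define S\<phi> where "S\<phi> = (\<Sum>u\<in>U. \<Sum>v\<in>U. q u * q v * \<phi> u v)"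
  define y where "y = (\<lambda>\<sigma> x. \<theta> * (Z \<sigma> x - r * s2))"
  have r1: "1 \<le> r" "2 * r \<le> m" using m2 unfolding r_def by auto
  have finP: "finite ?P" by (rule finite_permutations) simp
  have cardP: "card ?P = fact m" by (rule card_permutations) auto
  have Npos: "N > 0" unfolding N_def by simp
  have P_ne: "?P \<noteq> {}" using permutes_id[of ?S] by blast
  have w0: "(\<Prod>j<m. q (x j)) \<ge> 0" if "x \<in> ?\<Omega>" for x
    using that q0 by (intro prod_nonneg) (auto simp: PiE_mem)
  \<comment> \<open>Hoeffding's representation\<close>
  have KZ: "real m * (real m - 1) * (\<Sum>\<sigma>\<in>?P. Z \<sigma> x) = r * N * K x" for x
  proof -
    have "real m * (real m - 1) * (\<Sum>\<sigma>\<in>?P. Z \<sigma> x)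
        = (\<Sum>k<r. real m * (real m - 1) * (\<Sum>\<sigma>\<in>?P. f (x (\<sigma> (2*k))) (x (\<sigma> (2*k+1)))))"
      unfolding Z_def by (simp add: sum.swap[of _ ?P] sum_distrib_left)
    also have "\<dots> = (\<Sum>k<r. N * K x)"
    proof (rule sum.cong[OF refl])
      fix k assume "k \<in> {..<r}"
      then have "2*k < m" "2*k+1 < m" "2*k \<noteq> 2*k+1" using r1 by auto
      from perm_pair_count[OF this, of "\<lambda>j l. f (x j) (x l)"]
      show "real m * (real m - 1) * (\<Sum>\<sigma>\<in>?P. f (x (\<sigma> (2*k))) (x (\<sigma> (2*k+1)))) = N * K x"
        unfolding N_def K_def by simp
    qed
    also have "\<dots> = r * N * K x" by simp
    finally show ?thesis .
  qed
  have Yeq: "\<theta> * r * (Y x - s2) = (\<Sum>\<sigma>\<in>?P. (1/N) * y \<sigma> x)" for x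
  proof -
    have mm: "real m * (real m - 1) > 0" using m2 by simp
    have "r * Y x = r * K x / (real m * (real m - 1))" unfolding Y_def K_def by simp
    also have "\<dots> = (\<Sum>\<sigma>\<in>?P. Z \<sigma> x) / N"
    proof (rule iffD2[OF frac_eq_eq])
      show "real m * (real m - 1) \<noteq> 0" "N \<noteq> 0" using mm Npos m2 by auto
      show "r * K x * N = (\<Sum>\<sigma>\<in>?P. Z \<sigma> x) * (real m * (real m - 1))"
        using KZ[of x] by (simp add: ac_simps)
    qed
    finally have rY: "r * Y x = (\<Sum>\<sigma>\<in>?P. Z \<sigma> x) / N" .
    have sy: "(\<Sum>\<sigma>\<in>?P. y \<sigma> x) = \<theta> * (\<Sum>\<sigma>\<in>?P. Z \<sigma> x) - \<theta> * r * s2 * N"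
      unfolding y_def right_diff_distrib sum_subtractf sum_distrib_left[symmetric] using cardP
      unfolding N_def by simp
    have "(\<Sum>\<sigma>\<in>?P. (1/N) * y \<sigma> x) = (1/N) * (\<Sum>\<sigma>\<in>?P. y \<sigma> x)"
      by (simp add: sum_distrib_left)
    also have "\<dots> = \<theta> * ((\<Sum>\<sigma>\<in>?P. Z \<sigma> x) / N) - \<theta> * r * s2"
      unfolding sy using Npos by (simp add: field_simps)
    also have "\<dots> = \<theta> * r * (Y x - s2)"
      unfolding rY[symmetric] by (simp add: algebra_simps)
    finally show ?thesis by simp
  qed
  have jensen: "exp (\<Sum>\<sigma>\<in>?P. (1/N) * y \<sigma> x) \<le> (\<Sum>\<sigma>\<in>?P. (1/N) * exp (y \<sigma> x))" for x
  proof -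
    have "(\<Sum>\<sigma>\<in>?P. 1/N) = 1" using cardP Npos unfolding N_def by simp
    from convex_on_sum[OF finP P_ne exp_convex this, of "\<lambda>\<sigma>. y \<sigma> x"] Npos
    show ?thesis by simp
  qed
  have factor: "(\<Sum>x\<in>?\<Omega>. (\<Prod>j<m. q (x j)) * exp (y \<sigma> x)) = S\<phi> ^ r" if \<sigma>: "\<sigma> permutes ?S" for \<sigma>
  proof -
    define I where "I = ?S - \<sigma> ` {..<2*r}"
    have sub: "\<sigma> ` {..<2*r} \<subseteq> ?S"
      using permutes_image[OF \<sigma>] r1 by auto
    have SI: "\<sigma> ` {..<2*r} \<union> I = ?S" unfolding I_def using sub by auto
    have inj: "inj_on \<sigma> {..<2*r}" using permutes_inj_on[OF \<sigma>] .
    have disj: "\<sigma> ` {..<2*r} \<inter> I = {}" unfolding I_def by auto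
    have finI: "finite I" unfolding I_def by simp
    have ey: "exp (y \<sigma> x) = (\<Prod>k<r. \<phi> (x (\<sigma> (2*k))) (x (\<sigma> (2*k+1))))" for x
    proof -
      have "y \<sigma> x = (\<Sum>k<r. \<theta> * (f (x (\<sigma> (2*k))) (x (\<sigma> (2*k+1))) - s2))"
        unfolding y_def Z_def right_diff_distrib sum_subtractf sum_distrib_left[symmetric] by simp
      then show ?thesis unfolding \<phi>_def by (simp add: exp_sum)
    qed
    have "(\<Sum>x\<in>?\<Omega>. (\<Prod>j<m. q (x j)) * exp (y \<sigma> x))
       = (\<Sum>x\<in>PiE (\<sigma> ` {..<2*r} \<union> I) (\<lambda>_. U).
           (\<Prod>j\<in>\<sigma> ` {..<2*r} \<union> I. q (x j)) * ((\<Prod>k<r. \<phi> (x (\<sigma> (2*k))) (x (\<sigma> (2*k+1)))) * 1))"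
      unfolding SI ey by simp
    also have "\<dots> = S\<phi> ^ r * (\<Sum>x\<in>PiE I (\<lambda>_. U). (\<Prod>j\<in>I. q (x j)) * 1)"
      unfolding S\<phi>_def by (rule pairs_factor[OF inj finI disj]) simp
    also have "(\<Sum>x\<in>PiE I (\<lambda>_. U). (\<Prod>j\<in>I. q (x j)) * 1) = 1"
      using prod_sum_PiE[OF finI, of "\<lambda>_. U" "\<lambda>_ u. q u"] U q1 by simp
    finally show ?thesis by simp
  qed
  have qq1: "(\<Sum>u\<in>U. \<Sum>v\<in>U. q u * q v) = 1"
    using q1 by (simp add: sum_product[symmetric])
  have Sphi: "S\<phi> = exp (- \<theta> * s2) * (1 + s2 * (exp \<theta> - 1))"
  proof -
    have phi_eq: "\<phi> u v = exp (- \<theta> * s2) * (1 + f u v * (exp \<theta> - 1))" for u v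
      using f01[of u v] unfolding \<phi>_def by (auto simp: exp_add[symmetric] algebra_simps)
    have "S\<phi> = (\<Sum>u\<in>U. \<Sum>v\<in>U. E * (q u * q v) + (E * c) * (q u * q v * f u v))"
      if "E = exp (- \<theta> * s2)" "c = exp \<theta> - 1" for E c
      unfolding S\<phi>_def that phi_eq by (intro sum.cong refl) (simp add: algebra_simps)
    then have "S\<phi> = E * (\<Sum>u\<in>U. \<Sum>v\<in>U. q u * q v) + (E * c) * (\<Sum>u\<in>U. \<Sum>v\<in>U. q u * q v * f u v)"
      if "E = exp (- \<theta> * s2)" "c = exp \<theta> - 1" for E c
      using that by (simp add: sum.distrib sum_distrib_left)
    then have "S\<phi> = exp (- \<theta> * s2) * 1 + (exp (- \<theta> * s2) * (exp \<theta> - 1)) * s2"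
      unfolding qq1 s2_def[symmetric] by blast
    then show ?thesis by (simp add: algebra_simps)
  qed
  have s2_0: "s2 \<ge> 0" unfolding s2_def using q0 f01
    by (intro sum_nonneg mult_nonneg_nonneg) (auto, metis order_refl zero_le_one)
  have Sphi0: "S\<phi> \<ge> 0" unfolding S\<phi>_def \<phi>_def using q0
    by (intro sum_nonneg mult_nonneg_nonneg) auto
  have Sphi_le: "S\<phi> \<le> exp (s2 * (exp \<theta> - 1 - \<theta>))"
  proof -
    have "1 + s2 * (exp \<theta> - 1) \<le> exp (s2 * (exp \<theta> - 1))" by (rule exp_ge_add_one_self)
    then have "S\<phi> \<le> exp (- \<theta> * s2) * exp (s2 * (exp \<theta> - 1))"
      unfolding Sphi by (intro mult_left_mono) auto
    also have "\<dots> = exp (s2 * (exp \<theta> - 1 - \<theta>))" by (simp add: exp_add[symmetric] algebra_simps)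
    finally show ?thesis .
  qed
  have "(\<Sum>x\<in>?\<Omega>. (\<Prod>j<m. q (x j)) * exp (\<theta> * r * (Y x - s2)))
      \<le> (\<Sum>x\<in>?\<Omega>. (\<Prod>j<m. q (x j)) * (\<Sum>\<sigma>\<in>?P. (1/N) * exp (y \<sigma> x)))"
    unfolding Yeq using jensen w0 by (intro sum_mono mult_left_mono) auto
  also have "\<dots> = (\<Sum>\<sigma>\<in>?P. (1/N) * (\<Sum>x\<in>?\<Omega>. (\<Prod>j<m. q (x j)) * exp (y \<sigma> x)))"
    by (simp add: sum_distrib_left sum.swap[of _ ?P] mult.left_commute)
  also have "\<dots> = (\<Sum>\<sigma>\<in>?P. (1/N) * S\<phi> ^ r)"
    using factor by (intro sum.cong refl) auto
  also have "\<dots> = S\<phi> ^ r" using cardP Npos unfolding N_def by simp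
  also have "\<dots> \<le> exp (s2 * (exp \<theta> - 1 - \<theta>)) ^ r"
    by (rule power_mono[OF Sphi_le Sphi0])
  also have "\<dots> = exp (r * s2 * (exp \<theta> - 1 - \<theta>))"
    by (simp add: exp_of_nat_mult[symmetric] mult.assoc)
  finally show ?thesis .
qed

theorem corollary3:
  fixes U :: "'a set" and q :: "'a \<Rightarrow> real" and h :: "'a \<Rightarrow> nat"
    and n m :: nat and \<beta> lam :: real
  assumes "finite U"
    and "\<And>u. u \<in> U \<Longrightarrow> q u \<ge> 0"
    and "(\<Sum>u\<in>U. q u) = 1"
    and "\<And>u. u \<in> U \<Longrightarrow> h u \<in> {1..n}"
    and "n > 24"
    and "\<beta> > ln 3 / ln n"
    and "lam > 1/2"
    and "real m = real n powr (1/2 + \<beta> + lam)"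
  shows "prob_prod U q m (\<lambda>x.
           \<bar>(\<Sum>i=1..n. real (load h m x i) * (real (load h m x i) - 1) / (real m * (real m - 1)))
              * (1 / sq_norm_p U q h n) - 1\<bar> \<le> 22/5 * real n powr (-\<beta>/2))
         \<ge> 1 - 10/9 * exp (- (real n powr (lam - 1/2)))"
proof -
  note U = assms(1) and q0 = assms(2) and q1 = assms(3) and hU = assms(4) and n24 = assms(5)
    and beta = assms(6) and lam = assms(7) and mdef = assms(8)
  let ?S = "{..<m}"
  let ?\<Omega> = "PiE ?S (\<lambda>_. U)"
  define w where "w = (\<lambda>x. \<Prod>j<m. q (x j))"
  define f where "f = (\<lambda>u v. if h u = h v then 1 else (0::real))"
  define s2 where "s2 = (\<Sum>u\<in>U. \<Sum>v\<in>U. q u * q v * f u v)"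
  define Y where "Y = (\<lambda>x. (\<Sum>j<m. \<Sum>l\<in>{..<m}-{j}. f (x j) (x l)) / (real m * (real m - 1)))"
  define r where "r = m div 2"
  define P where "P = real n powr \<beta>"
  define X where "X = real n powr (lam - 1/2)"
  define t where "t = 22/5 * real n powr (-\<beta>/2)"
  define E where "E = (\<lambda>x. \<bar>(\<Sum>i=1..n. real (load h m x i) * (real (load h m x i) - 1) / (real m * (real m - 1)))
              * (1 / sq_norm_p U q h n) - 1\<bar> \<le> 22/5 * real n powr (-\<beta>/2))"
  have npos: "real n > 0" using n24 by simp
  have P3: "P > 3"
  proof -
    have "ln (real n) > 0" using n24 by simp
    then have "\<beta> * ln (real n) > ln 3" using beta by (simp add: field_simps)
    then have "exp (\<beta> * ln (real n)) > exp (ln 3)" by (rule exp_less_mono)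
    then show ?thesis unfolding P_def powr_def using npos by simp
  qed
  have X1: "X > 1" unfolding X_def using n24 lam by simp
  have mPX: "real m = real n * P * X"
  proof -
    have e: "1/2 + \<beta> + lam = 1 + \<beta> + (lam - 1/2)" by simp
    show ?thesis unfolding mdef P_def X_def e powr_add using npos by simp
  qed
  have t2: "t^2 = 484/(25*P)"
  proof -
    have "(real n powr (-\<beta>/2))^2 = real n powr (-\<beta>)"
      by (simp add: power2_eq_square powr_add[symmetric])
    then show ?thesis unfolding t_def P_def using npos by (simp add: power_mult_distrib powr_minus field_simps)
  qed
  have t0: "t \<ge> 0" unfolding t_def by simp
  have t3: "t \<le> 3"
  proof -
    have "t^2 \<le> 3^2" unfolding t2 using P3 by (simp add: field_simps)
    then show ?thesis by (rule power2_le_imp_le) simp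
  qed
  have m72: "real m > 72"
  proof -
    have "real n * P > 24 * 3" by (rule mult_strict_mono) (use n24 P3 in auto)
    then have "real n * P * X > 72 * 1" by (intro mult_strict_mono) (use X1 in auto)
    then show ?thesis using mPX by simp
  qed
  have bp: "bucket_prob U q h i = (\<Sum>u\<in>U. q u * (if h u = i then 1 else 0))" for i
    unfolding bucket_prob_def using U by (simp add: sum.inter_filter if_distrib cong: if_cong)
  have delta: "(\<Sum>i=1..n. (if h u = i then c i else 0)) = c (h u)" if "u \<in> U" for u and c :: "nat \<Rightarrow> real"
    using hU[OF that] by (simp add: sum.delta)
  have sum_p: "(\<Sum>i=1..n. bucket_prob U q h i) = 1"
  proof -
    have "(\<Sum>i=1..n. bucket_prob U q h i) = (\<Sum>u\<in>U. \<Sum>i=1..n. (if h u = i then q u else 0))"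
      unfolding bp by (subst sum.swap) (simp add: if_distrib cong: if_cong)
    also have "\<dots> = (\<Sum>u\<in>U. q u)" using delta[where c="\<lambda>_. q _"] by (intro sum.cong refl) (simp add: sum.delta)
    finally show ?thesis using q1 by simp
  qed
  have ind: "(\<Sum>i=1..n. (if h u = i then 1 else 0)*(if h v = i then 1 else 0::real)) = f u v" if u: "u \<in> U" for u v
  proof -
    have "(\<Sum>i=1..n. (if h u = i then 1 else 0)*(if h v = i then 1 else 0::real))
       = (\<Sum>i=1..n. if h u = i then (if h v = i then 1 else 0) else 0)" by (intro sum.cong) auto
    also have "\<dots> = (if h v = h u then 1 else 0)" by (subst sum.delta') (use hU[OF u] in auto)
    finally show ?thesis unfolding f_def by auto
  qed
  have s2eq: "sq_norm_p U q h n = s2"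
  proof -
    have "sq_norm_p U q h n = (\<Sum>i=1..n. (\<Sum>u\<in>U. q u * (if h u = i then 1 else 0)) * (\<Sum>v\<in>U. q v * (if h v = i then 1 else 0)))"
      unfolding sq_norm_p_def bp by (simp add: power2_eq_square)
    also have "\<dots> = (\<Sum>i=1..n. \<Sum>u\<in>U. \<Sum>v\<in>U. q u * q v * ((if h u = i then 1 else 0) * (if h v = i then 1 else 0)))"
      by (simp add: sum_product algebra_simps)
    also have "\<dots> = (\<Sum>u\<in>U. \<Sum>v\<in>U. q u * q v * (\<Sum>i=1..n. (if h u = i then 1 else 0) * (if h v = i then 1 else 0)))"
    proof -
      have "(\<Sum>i=1..n. \<Sum>u\<in>U. \<Sum>v\<in>U. q u * q v * ((if h u = i then 1 else 0) * (if h v = i then 1 else 0)))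
        = (\<Sum>u\<in>U. \<Sum>v\<in>U. \<Sum>i=1..n. q u * q v * ((if h u = i then 1 else 0) * (if h v = i then 1 else 0)))"
        by (subst sum.swap, rule sum.cong[OF refl], rule sum.swap)
      then show ?thesis by (simp add: sum_distrib_left)
    qed
    also have "\<dots> = s2" unfolding s2_def
      using ind by (intro sum.cong refl) auto
    finally show ?thesis .
  qed
  have s2n: "s2 \<ge> 1 / real n"
  proof -
    have "(\<Sum>i=1..n. bucket_prob U q h i)^2 \<le> (\<Sum>i=1..n. (bucket_prob U q h i)^2) * card {1..n}"
      by (rule sum_squared_le_sum_of_squares)
    then have "1 \<le> s2 * real n" using sum_p s2eq unfolding sq_norm_p_def by simp
    then show ?thesis using npos by (simp add: field_simps)
  qed
  have s2pos: "s2 > 0" using s2n npos by (smt (verit) divide_pos_pos)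
  have loadY: "(\<Sum>i=1..n. real (load h m x i) * (real (load h m x i) - 1) / (real m * (real m - 1))) = Y x"
    if x: "x \<in> ?\<Omega>" for x
  proof -
    define a where "a = (\<lambda>i j. if h (x j) = i then 1 else (0::real))"
    have k: "real (load h m x i) = (\<Sum>j<m. a i j)" for i
    proof -
      have "real (load h m x i) = (\<Sum>j\<in>{j\<in>?S. h (x j) = i}. 1)" unfolding load_def by simp
      also have "\<dots> = (\<Sum>j<m. a i j)" unfolding a_def by (rule sum.inter_filter) simp
      finally show ?thesis .
    qed
    have sq: "(\<Sum>j<m. a i j) * ((\<Sum>j<m. a i j) - 1) = (\<Sum>j<m. \<Sum>l\<in>?S-{j}. a i j * a i l)" for i
    proof -
      have "(\<Sum>j<m. a i j) * (\<Sum>j<m. a i j) = (\<Sum>j<m. \<Sum>l<m. a i j * a i l)" by (rule sum_product)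
      also have "\<dots> = (\<Sum>j<m. a i j + (\<Sum>l\<in>?S-{j}. a i j * a i l))"
      proof (rule sum.cong[OF refl])
        fix j assume "j \<in> ?S"
        then have "(\<Sum>l<m. a i j * a i l) = a i j * a i j + (\<Sum>l\<in>?S-{j}. a i j * a i l)"
          by (simp add: sum.remove)
        moreover have "a i j * a i j = a i j" unfolding a_def by simp
        ultimately show "(\<Sum>l<m. a i j * a i l) = a i j + (\<Sum>l\<in>?S-{j}. a i j * a i l)" by simp
      qed
      also have "\<dots> = (\<Sum>j<m. a i j) + (\<Sum>j<m. \<Sum>l\<in>?S-{j}. a i j * a i l)" by (rule sum.distrib)
      finally show ?thesis by (simp add: algebra_simps)
    qed
    have "(\<Sum>i=1..n. real (load h m x i) * (real (load h m x i) - 1))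
        = (\<Sum>i=1..n. \<Sum>j<m. \<Sum>l\<in>?S-{j}. a i j * a i l)" unfolding k sq ..
    also have "\<dots> = (\<Sum>j<m. \<Sum>l\<in>?S-{j}. \<Sum>i=1..n. a i j * a i l)"
      by (subst sum.swap, rule sum.cong[OF refl], rule sum.swap)
    also have "\<dots> = (\<Sum>j<m. \<Sum>l\<in>?S-{j}. f (x j) (x l))"
    proof (intro sum.cong refl)
      fix j l assume "j \<in> ?S"
      then have "x j \<in> U" using x by (auto simp: PiE_mem)
      then show "(\<Sum>i=1..n. a i j * a i l) = f (x j) (x l)" unfolding a_def using ind by simp
    qed
    finally show ?thesis unfolding Y_def by (simp add: sum_divide_distrib[symmetric])
  qed
  have w0: "w x \<ge> 0" if "x \<in> ?\<Omega>" for x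
    unfolding w_def using that q0 by (intro prod_nonneg) (auto simp: PiE_mem)
  have tot: "(\<Sum>x\<in>?\<Omega>. w x) = 1"
    unfolding w_def using prod_sum_PiE[of ?S "\<lambda>_. U" "\<lambda>_ u. q u"] q1 U by simp
  have finO: "finite ?\<Omega>" using U by (simp add: finite_PiE)
  have m2: "2 \<le> m" using m72 by simp
  have f01: "f u v = 0 \<or> f u v = 1" for u v unfolding f_def by simp
  have mgf: "(\<Sum>x\<in>?\<Omega>. w x * exp (\<theta> * real r * (Y x - s2))) \<le> exp (real r * s2 * (exp \<theta> - 1 - \<theta>))" for \<theta>
    unfolding w_def by (rule mgf_bound[OF U q0 q1 f01 m2 s2_def r_def Y_def])
  define \<theta> where "\<theta> = t / 3"
  define a where "a = t * s2"
  have th0: "\<theta> \<ge> 0" "\<theta> \<le> 1" unfolding \<theta>_def using t0 t3 by auto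
  have eb1: "exp \<theta> - 1 - \<theta> \<le> \<theta>^2" using exp_bound[OF th0] by simp
  have eb2: "exp (-\<theta>) - 1 - (-\<theta>) \<le> \<theta>^2"
  proof -
    have pos: "1 + \<theta> > 0" using th0 by simp
    have "exp (-\<theta>) = 1 / exp \<theta>" by (simp add: exp_minus field_simps)
    also have "\<dots> \<le> 1 / (1 + \<theta>)" using exp_ge_add_one_self[of \<theta>] pos by (intro divide_left_mono) auto
    also have "\<dots> \<le> 1 - \<theta> + \<theta>^2"
    proof -
      have "1 \<le> (1 - \<theta> + \<theta>^2) * (1 + \<theta>)" using th0 by (simp add: algebra_simps power2_eq_square power3_eq_cube)
      then show ?thesis using pos by (simp add: divide_simps)
    qed
    finally show ?thesis by simp
  qed
  have r0: "real r \<ge> 0" by simp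
  have mono_exp: "exp (real r * s2 * c) \<le> exp (real r * s2 * \<theta>^2)" if "c \<le> \<theta>^2" for c
    using that r0 s2pos by (simp add: mult_left_mono)
  define A where "A = (\<lambda>x. \<theta> * real r * (Y x - s2) + (- (\<theta> * real r * a)))"
  define B where "B = (\<lambda>x. (-\<theta>) * real r * (Y x - s2) + (- (\<theta> * real r * a)))"
  have pointwise: "(if E x then 0 else w x) \<le> w x * (exp (A x) + exp (B x))" if x: "x \<in> ?\<Omega>" for x
  proof (cases "E x")
    case True then show ?thesis using w0[OF x] by simp
  next
    case False
    then have "\<bar>Y x * (1 / s2) - 1\<bar> > t" unfolding E_def t_def loadY[OF x] s2eq by simp
    moreover have "\<bar>Y x * (1 / s2) - 1\<bar> = \<bar>Y x - s2\<bar> / s2" using s2pos by (simp add: field_simps)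
    ultimately have "\<bar>Y x - s2\<bar> > a" unfolding a_def using s2pos by (simp add: field_simps)
    then have disj: "Y x - s2 - a \<ge> 0 \<or> -(Y x - s2) - a \<ge> 0" by linarith
    have Aeq: "A x = (\<theta> * real r) * (Y x - s2 - a)" unfolding A_def by (simp add: algebra_simps)
    have Beq: "B x = (\<theta> * real r) * (-(Y x - s2) - a)" unfolding B_def by (simp add: algebra_simps)
    have c0: "\<theta> * real r \<ge> 0" using th0 r0 by simp
    have "A x \<ge> 0 \<or> B x \<ge> 0" using disj c0 unfolding Aeq Beq by (metis mult_nonneg_nonneg)
    then have "1 \<le> exp (A x) + exp (B x)"
      by (smt (verit) exp_ge_zero one_le_exp_iff)
    then show ?thesis using False w0[OF x] mult_left_mono[of 1 "exp (A x) + exp (B x)" "w x"] by simp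
  qed
  have expA: "exp (A x) = exp (- (\<theta> * real r * a)) * exp (\<theta> * real r * (Y x - s2))" for x
    unfolding A_def by (subst exp_add[symmetric]) (simp add: algebra_simps)
  have expB: "exp (B x) = exp (- (\<theta> * real r * a)) * exp ((-\<theta>) * real r * (Y x - s2))" for x
    unfolding B_def by (subst exp_add[symmetric]) (simp add: algebra_simps)
  have "(\<Sum>x\<in>?\<Omega>. if E x then 0 else w x) \<le> (\<Sum>x\<in>?\<Omega>. w x * (exp (A x) + exp (B x)))"
    using pointwise by (intro sum_mono) auto
  also have "\<dots> = exp (- (\<theta> * real r * a)) * (\<Sum>x\<in>?\<Omega>. w x * exp (\<theta> * real r * (Y x - s2)))
      + exp (- (\<theta> * real r * a)) * (\<Sum>x\<in>?\<Omega>. w x * exp ((-\<theta>) * real r * (Y x - s2)))"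
    unfolding expA expB by (simp add: sum_distrib_left sum.distrib algebra_simps)
  also have "\<dots> \<le> exp (- (\<theta> * real r * a)) * exp (real r * s2 * \<theta>^2)
      + exp (- (\<theta> * real r * a)) * exp (real r * s2 * \<theta>^2)"
  proof (intro add_mono mult_left_mono)
    show "(\<Sum>x\<in>?\<Omega>. w x * exp (\<theta> * real r * (Y x - s2))) \<le> exp (real r * s2 * \<theta>^2)"
      using mgf[of \<theta>] mono_exp[OF eb1] by linarith
    show "(\<Sum>x\<in>?\<Omega>. w x * exp ((-\<theta>) * real r * (Y x - s2))) \<le> exp (real r * s2 * \<theta>^2)"
      using mgf[of "-\<theta>"] mono_exp[OF eb2] by linarith
  qed auto
  also have "\<dots> = 2 * exp (real r * s2 * \<theta>^2 - \<theta> * real r * a)"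
    by (simp add: exp_diff exp_minus field_simps)
  also have "real r * s2 * \<theta>^2 - \<theta> * real r * a = -(2/9) * real r * s2 * t^2"
    unfolding \<theta>_def a_def by (simp add: power2_eq_square field_simps)
  finally have fail: "(\<Sum>x\<in>?\<Omega>. if E x then 0 else w x) \<le> 2 * exp (-(2/9) * real r * s2 * t^2)" .
  have rm: "real r \<ge> (real n * P * X - 1) / 2"
  proof -
    have "m \<le> 2 * r + 1" unfolding r_def by linarith
    then have "real m \<le> 2 * real r + 1" by linarith
    then show ?thesis unfolding mPX[symmetric] by (simp add: field_simps)
  qed
  have fin: "2 * exp (-(2/9) * real r * s2 * t^2) \<le> 10/9 * exp (-X)"
    by (rule final_arith[OF _ P3 X1 rm _ t2]) (use n24 s2n in auto)
  have pp: "prob_prod U q m E = 1 - (\<Sum>x\<in>?\<Omega>. if E x then 0 else w x)"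
  proof -
    have "prob_prod U q m E = (\<Sum>x\<in>?\<Omega>. if E x then w x else 0)"
      unfolding prob_prod_def w_def by (rule sum.inter_filter[OF finO])
    also have "\<dots> = (\<Sum>x\<in>?\<Omega>. w x - (if E x then 0 else w x))" by (intro sum.cong) auto
    also have "\<dots> = 1 - (\<Sum>x\<in>?\<Omega>. if E x then 0 else w x)" by (simp add: sum_subtractf tot)
    finally show ?thesis .
  qed
  have "prob_prod U q m E \<ge> 1 - 10/9 * exp (-X)" using pp fail fin by linarith
  then show ?thesis unfolding E_def X_def .
qed

end
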